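(* Let $N$ be a coupled $s$-square network with at least two reactions, none of which is an inflow or outflow reaction, in which every species has total molecularity at most two, and suppose $\operatorname{Or}(N)\ne0$. Then every reaction of $N$ has the form $A+B\to0$ or $A\to B$ for two distinct species $A,B$ of $N$.
   Context: A square ($s$-square) network is a list of $s$ reactions $y_k\to y'_k$ ($y_k,y'_k\in\mathbb{Z}^s_{\ge0}$, $y_k\ne y'_k$) on $s$ species, each species occurring in some complex. Inflow/outflow reactions are $0\to X_i$ and $X_i\to 0$. A network is coupled if its reactions cannot be split into two nonempty sets involving disjoint sets of species. Total molecularity: list the non-flow reactions as non-reversible ones $y_j\to y_j'$ plus each reversible pair $y_j\rightleftarrows y_j'$ once; $\operatorname{TM}(X_i)=\sum_j(y_{ji}+y'_{ji})$. Orientation: $\operatorname{Or}(N)=\operatorname{sign}(\det M\det R)$ where $M$ has rows $y_k$ and $R$ has rows $y_k-y'_k$. *)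

theory Defs
  imports "HOL-Analysis.Analysis"
begin

text \<open>Species are the elements of a finite type 's; s = CARD('s).
  A square network is given by reactant and product complexes
  y k, y' k :: 's \<Rightarrow> nat for reaction index k :: 's (a list of s reactions).\<close>

definition unit_cplx :: "'s \<Rightarrow> ('s \<Rightarrow> nat)" where
  "unit_cplx A = (\<lambda>j. if j = A then 1 else 0)"

definition is_flow :: "('s \<Rightarrow> nat) \<Rightarrow> ('s \<Rightarrow> nat) \<Rightarrow> bool" where
  "is_flow a b \<longleftrightarrow> (a = (\<lambda>_. 0) \<and> (\<exists>i. b = unit_cplx i)) \<or> (b = (\<lambda>_. 0) \<and> (\<exists>i. a = unit_cplx i))"

definition rxn_species :: "('k \<Rightarrow> 's \<Rightarrow> nat) \<Rightarrow> ('k \<Rightarrow> 's \<Rightarrow> nat) \<Rightarrow> 'k \<Rightarrow> 's set" where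
  "rxn_species y y' k = {i. y k i \<noteq> 0 \<or> y' k i \<noteq> 0}"

definition square_network :: "('s::finite \<Rightarrow> 's \<Rightarrow> nat) \<Rightarrow> ('s \<Rightarrow> 's \<Rightarrow> nat) \<Rightarrow> bool" where
  "square_network y y' \<longleftrightarrow> (\<forall>k. y k \<noteq> y' k) \<and> (\<forall>i. \<exists>k. i \<in> rxn_species y y' k)"

definition coupled :: "('k \<Rightarrow> 's \<Rightarrow> nat) \<Rightarrow> ('k \<Rightarrow> 's \<Rightarrow> nat) \<Rightarrow> bool" where
  "coupled y y' \<longleftrightarrow> \<not> (\<exists>K1 K2. K1 \<union> K2 = UNIV \<and> K1 \<inter> K2 = {} \<and> K1 \<noteq> {} \<and> K2 \<noteq> {} \<and>
      (\<Union>k\<in>K1. rxn_species y y' k) \<inter> (\<Union>k\<in>K2. rxn_species y y' k) = {})"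

text \<open>Total molecularity: non-flow reactions, with a reaction and its reverse
  identified (each reversible pair counted once), i.e. summing over the set of
  unordered pairs {y_k, y'_k}.\<close>
definition total_molecularity :: "('k \<Rightarrow> 's \<Rightarrow> nat) \<Rightarrow> ('k \<Rightarrow> 's \<Rightarrow> nat) \<Rightarrow> 's \<Rightarrow> nat" where
  "total_molecularity y y' i =
     (\<Sum>C\<in>{{y k, y' k} | k. \<not> is_flow (y k) (y' k)}. \<Sum>c\<in>C. c i)"

definition complex_matrix :: "('s::finite \<Rightarrow> 's \<Rightarrow> nat) \<Rightarrow> int^'s^'s" where
  "complex_matrix y = (\<chi> k i. int (y k i))"

definition reaction_matrix :: "('s::finite \<Rightarrow> 's \<Rightarrow> nat) \<Rightarrow> ('s \<Rightarrow> 's \<Rightarrow> nat) \<Rightarrow> int^'s^'s" where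
  "reaction_matrix y y' = (\<chi> k i. int (y k i) - int (y' k i))"

definition orientation :: "('s::finite \<Rightarrow> 's \<Rightarrow> nat) \<Rightarrow> ('s \<Rightarrow> 's \<Rightarrow> nat) \<Rightarrow> int" where
  "orientation y y' = sgn (det (complex_matrix y) * det (reaction_matrix y y'))"

end

theory Submission
  imports Defs
begin

lemma det_neg_rows:
  fixes A :: "int^'n::finite^'n"
  assumes ij: "i \<noteq> j" and r: "row i A = - row j A"
  shows "det A = 0"
proof -
  have "det A = det (\<chi> k. if k = i then row i A + 1 *s row j A else row k A)"
    using det_row_operation[OF ij, of A 1] by simp
  also have "\<dots> = 0"
  proof (rule det_zero_row(1)[of i])
    have "\<And>m. A $ i $ m = - (A $ j $ m)" using r by (simp add: row_def vec_eq_iff)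
    thus "row i (\<chi> k. if k = i then row i A + 1 *s row j A else row k A) = 0"
      by (simp add: row_def vec_eq_iff)
  qed
  finally show ?thesis .
qed

lemma sum_one_unit:
  fixes f :: "'s::finite \<Rightarrow> nat"
  assumes "sum f UNIV = 1"
  shows "\<exists>A. f = unit_cplx A"
proof -
  obtain A where A: "f A \<noteq> 0" using assms by (metis sum.neutral zero_neq_one)
  have "sum f UNIV = f A + sum f (UNIV - {A})" by (simp add: sum.remove)
  hence fa: "f A = 1" and r: "sum f (UNIV - {A}) = 0" using assms A by linarith+
  have "\<forall>i\<in>UNIV - {A}. f i = 0" using r by simp
  hence "\<And>i. i \<noteq> A \<Longrightarrow> f i = 0" by blast
  thus ?thesis using fa by (intro exI[of _ A]) (auto simp: unit_cplx_def)
qed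

lemma sum_two_unit:
  fixes f :: "'s::finite \<Rightarrow> nat"
  assumes "sum f UNIV = 2"
  shows "\<exists>A B. f = (\<lambda>j. unit_cplx A j + unit_cplx B j)"
proof -
  obtain A where A: "f A \<noteq> 0" using assms by (metis sum.neutral zero_neq_numeral)
  define g where "g = (\<lambda>j. f j - unit_cplx A j)"
  have fg: "f = (\<lambda>j. unit_cplx A j + g j)" using A
    by (auto simp: g_def unit_cplx_def fun_eq_iff)
  have "sum f UNIV = sum (unit_cplx A) UNIV + sum g UNIV"
    by (subst fg) (simp add: sum.distrib)
  moreover have "sum (unit_cplx A) UNIV = 1" by (simp add: unit_cplx_def)
  ultimately have "sum g UNIV = 1" using assms by simp
  then obtain B where "g = unit_cplx B" using sum_one_unit by blast
  thus ?thesis using fg by blast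
qed

theorem mainTheorem9:
  fixes y y' :: "'s::finite \<Rightarrow> 's \<Rightarrow> nat"
  assumes "square_network y y'"
    and "coupled y y'"
    and "CARD('s) \<ge> 2"
    and "\<forall>k. \<not> is_flow (y k) (y' k)"
    and "\<forall>i. total_molecularity y y' i \<le> 2"
    and "orientation y y' \<noteq> 0"
  shows "\<forall>k. \<exists>A B. A \<noteq> B \<and>
           ((y k = (\<lambda>j. unit_cplx A j + unit_cplx B j) \<and> y' k = (\<lambda>_. 0)) \<or>
            (y k = unit_cplx A \<and> y' k = unit_cplx B))"
proof -
  have neq: "\<And>k. y k \<noteq> y' k" using assms(1) by (simp add: square_network_def)
  have hM: "det (complex_matrix y) \<noteq> 0" and hR: "det (reaction_matrix y y') \<noteq> 0"
    using assms(6) by (auto simp: orientation_def sgn_0_0)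
  have nz: "y k \<noteq> (\<lambda>_. 0)" for k
  proof
    assume "y k = (\<lambda>_. 0)"
    hence "row k (complex_matrix y) = 0" by (simp add: row_def complex_matrix_def vec_eq_iff)
    thus False using hM det_zero_row(1) by blast
  qed
  have injp: "{y k, y' k} \<noteq> {y j, y' j}" if "k \<noteq> j" for k j
  proof
    assume e: "{y k, y' k} = {y j, y' j}"
    show False
    proof (cases "y k = y j")
      case True
      hence "row k (complex_matrix y) = row j (complex_matrix y)"
        by (simp add: row_def complex_matrix_def vec_eq_iff)
      thus False using hM det_identical_rows that by blast
    next
      case False
      with e have "y k = y' j" "y' k = y j" by (auto simp: doubleton_eq_iff)
      hence "row k (reaction_matrix y y') = - row j (reaction_matrix y y')"
        by (simp add: row_def reaction_matrix_def vec_eq_iff)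
      thus False using hR det_neg_rows that by blast
    qed
  qed
  have inj: "inj (\<lambda>k. {y k, y' k})" using injp by (meson injI)
  have setp: "{{y k, y' k} | k. \<not> is_flow (y k) (y' k)} = range (\<lambda>k. {y k, y' k})"
    using assms(4) by auto
  have TM: "total_molecularity y y' i = (\<Sum>k\<in>UNIV. y k i + y' k i)" for i
    unfolding total_molecularity_def setp
    by (subst sum.reindex[OF inj]) (simp add: neq)
  define n where "n k = (\<Sum>i\<in>UNIV. y k i + y' k i)" for k
  have "(\<Sum>k\<in>UNIV. n k) = (\<Sum>i\<in>UNIV. total_molecularity y y' i)"
    unfolding n_def TM by (rule sum.swap)
  also have "\<dots> \<le> (\<Sum>i\<in>(UNIV::'s set). 2)" using assms(5) by (intro sum_mono) auto
  finally have sumn: "(\<Sum>k\<in>UNIV. n k) \<le> (\<Sum>k\<in>(UNIV::'s set). 2)" by simp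
  have nsplit: "n k = sum (y k) UNIV + sum (y' k) UNIV" for k
    by (simp add: n_def sum.distrib)
  have ysum0: "sum f UNIV = 0 \<Longrightarrow> f = (\<lambda>_. 0)" for f :: "'s \<Rightarrow> nat"
    by (auto simp: fun_eq_iff)
  have n2: "n k \<ge> 2" for k
  proof (rule ccontr)
    assume "\<not> n k \<ge> 2"
    hence "n k \<le> 1" by simp
    moreover have "sum (y k) UNIV \<noteq> 0" using nz ysum0 by blast
    ultimately have a: "sum (y k) UNIV = 1" "sum (y' k) UNIV = 0" using nsplit[of k] by linarith+
    from a obtain A where "y k = unit_cplx A" using sum_one_unit by blast
    moreover have "y' k = (\<lambda>_. 0)" using a ysum0 by blast
    ultimately show False using assms(4) by (auto simp: is_flow_def)
  qed
  have neq2: "n k = 2" for k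
  proof (rule ccontr)
    assume "n k \<noteq> 2"
    hence "2 < n k" using n2[of k] by simp
    hence "(\<Sum>k\<in>(UNIV::'s set). 2) < (\<Sum>k\<in>UNIV. n k)"
      using n2 by (intro sum_strict_mono_ex1) auto
    thus False using sumn by simp
  qed
  show ?thesis
  proof
    fix k
    have ny: "sum (y k) UNIV \<noteq> 0" using nz ysum0 by blast
    have s2: "sum (y k) UNIV + sum (y' k) UNIV = 2" using neq2[of k] nsplit[of k] by simp
    show "\<exists>A B. A \<noteq> B \<and>
           ((y k = (\<lambda>j. unit_cplx A j + unit_cplx B j) \<and> y' k = (\<lambda>_. 0)) \<or>
            (y k = unit_cplx A \<and> y' k = unit_cplx B))"
    proof (cases "sum (y k) UNIV = 1")
      case True
      hence "sum (y' k) UNIV = 1" using s2 by simp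
      then obtain B where B: "y' k = unit_cplx B" using sum_one_unit by blast
      obtain A where A: "y k = unit_cplx A" using True sum_one_unit by blast
      have "A \<noteq> B" using A B neq[of k] by auto
      thus ?thesis using A B by blast
    next
      case False
      have a1: "sum (y k) UNIV = 2" using s2 ny False by (simp only:)
      have a: "sum (y k) UNIV = 2" "sum (y' k) UNIV = 0" using a1 s2 by simp_all
      obtain A B where AB: "y k = (\<lambda>j. unit_cplx A j + unit_cplx B j)"
        using a sum_two_unit by blast
      have y0: "y' k = (\<lambda>_. 0)" using a ysum0 by blast
      have "A \<noteq> B"
      proof
        assume AB': "A = B"
        have ykA: "y k A + y' k A = 2" using AB AB' y0 by (simp add: unit_cplx_def)
        have "total_molecularity y y' A = (y k A + y' k A) + (\<Sum>j\<in>UNIV-{k}. y j A + y' j A)"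
          unfolding TM by (rule sum.remove) auto
        hence "(\<Sum>j\<in>UNIV-{k}. y j A + y' j A) = 0" using assms(5)[rule_format, of A] ykA by linarith
        hence other: "\<And>j. j \<noteq> k \<Longrightarrow> y j A = 0 \<and> y' j A = 0" by simp
        have spk: "rxn_species y y' k = {A}"
          using AB AB' y0 by (auto simp: rxn_species_def unit_cplx_def)
        have "A \<notin> (\<Union>j\<in>UNIV-{k}. rxn_species y y' j)"
          using other by (auto simp: rxn_species_def)
        moreover have "UNIV - {k} \<noteq> {}"
        proof
          assume "UNIV - {k} = {}"
          hence "(UNIV::'s set) = {k}" by auto
          hence "CARD('s) = 1" by (metis card.empty card_insert_disjoint empty_iff finite.emptyI One_nat_def)
          thus False using assms(3) by simp
        qed
        note ne = calculation this
        have U1: "(\<Union>j\<in>{k}. rxn_species y y' j) = {A}" using spk by simp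
        have D: "(\<Union>j\<in>{k}. rxn_species y y' j) \<inter> (\<Union>j\<in>UNIV - {k}. rxn_species y y' j) = {}"
          unfolding U1 using ne(1) by blast
        have E: "\<exists>K1 K2. K1 \<union> K2 = UNIV \<and> K1 \<inter> K2 = {} \<and> K1 \<noteq> {} \<and> K2 \<noteq> {} \<and>
            (\<Union>k\<in>K1. rxn_species y y' k) \<inter> (\<Union>k\<in>K2. rxn_species y y' k) = {}"
          apply (rule exI[of _ "{k}"], rule exI[of _ "UNIV - {k}"])
          apply (intro conjI)
          using D ne(2) by auto
        show False using assms(2) E unfolding coupled_def by blast
      qed
      thus ?thesis using AB y0 by blast
    qed
  qed
qed

end
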